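(* Let $P$ and $Q$ be broken combs, and let $(P,c,x)$ and $(Q,c',x')$ be $n$-generated models on them, rooted at their roots, which are $3$-bisimilar. Then they are (fully) bisimilar.
   Context: An $n$-comb is a poset $\{x_1,\dots,x_n\}\sqcup\{y_1,\dots,y_n\}$ where $y_i\le z$ iff $y_i=z$, and $x_i\le z$ iff $z=x_j$ with $i\le j$ or $z=y_j$ with $i\le j$. A broken comb is a subposet of some $n$-comb containing all of $x_1,\dots,x_n$. A model over $n$ is a finite rooted poset with an order-preserving colouring into subsets of $\{p_1,\dots,p_n\}$; it is $n$-generated if no two distinct points generate bisimilar rooted submodels. Bisimulation: a relation relating the roots, preserving colours, with forth and back conditions along $\le$. $k$-bisimulation: relations $S_k\subseteq\dots\subseteq S_0$, roots related by $S_k$, $S_0$ colour-preserving, forth and back conditions from $S_{j+1}$ to $S_j$ for $j<k$. *)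

theory Defs
  imports Main
begin

text \<open>A model over n: carrier A, order le on A, colouring c into subsets of
  {p_1,...,p_n} (represented as subsets of {1..n}), root r.\<close>

definition is_model :: "nat \<Rightarrow> 'a set \<Rightarrow> ('a \<Rightarrow> 'a \<Rightarrow> bool) \<Rightarrow> ('a \<Rightarrow> nat set) \<Rightarrow> 'a \<Rightarrow> bool" where
  "is_model n A le c r \<longleftrightarrow>
     finite A \<and> r \<in> A \<and>
     (\<forall>a\<in>A. le a a) \<and>
     (\<forall>a\<in>A. \<forall>b\<in>A. le a b \<and> le b a \<longrightarrow> a = b) \<and>
     (\<forall>a\<in>A. \<forall>b\<in>A. \<forall>d\<in>A. le a b \<and> le b d \<longrightarrow> le a d) \<and>
     (\<forall>a\<in>A. le r a) \<and>
     (\<forall>a\<in>A. c a \<subseteq> {1..n}) \<and>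
     (\<forall>a\<in>A. \<forall>b\<in>A. le a b \<longrightarrow> c a \<subseteq> c b)"

definition is_bisimulation ::
  "('a \<times> 'b) set \<Rightarrow> 'a set \<Rightarrow> ('a \<Rightarrow> 'a \<Rightarrow> bool) \<Rightarrow> ('a \<Rightarrow> nat set) \<Rightarrow> 'a \<Rightarrow>
   'b set \<Rightarrow> ('b \<Rightarrow> 'b \<Rightarrow> bool) \<Rightarrow> ('b \<Rightarrow> nat set) \<Rightarrow> 'b \<Rightarrow> bool" where
  "is_bisimulation Z A le c r B le' c' r' \<longleftrightarrow>
     Z \<subseteq> A \<times> B \<and> (r, r') \<in> Z \<and>
     (\<forall>(u, v)\<in>Z. c u = c' v) \<and>
     (\<forall>(u, v)\<in>Z. \<forall>u'\<in>A. le u u' \<longrightarrow> (\<exists>v'\<in>B. le' v v' \<and> (u', v') \<in> Z)) \<and>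
     (\<forall>(u, v)\<in>Z. \<forall>v'\<in>B. le' v v' \<longrightarrow> (\<exists>u'\<in>A. le u u' \<and> (u', v') \<in> Z))"

definition bisimilar ::
  "'a set \<Rightarrow> ('a \<Rightarrow> 'a \<Rightarrow> bool) \<Rightarrow> ('a \<Rightarrow> nat set) \<Rightarrow> 'a \<Rightarrow>
   'b set \<Rightarrow> ('b \<Rightarrow> 'b \<Rightarrow> bool) \<Rightarrow> ('b \<Rightarrow> nat set) \<Rightarrow> 'b \<Rightarrow> bool" where
  "bisimilar A le c r B le' c' r' \<longleftrightarrow> (\<exists>Z. is_bisimulation Z A le c r B le' c' r')"

definition is_k_bisimulation ::
  "nat \<Rightarrow> (nat \<Rightarrow> ('a \<times> 'b) set) \<Rightarrow> 'a set \<Rightarrow> ('a \<Rightarrow> 'a \<Rightarrow> bool) \<Rightarrow> ('a \<Rightarrow> nat set) \<Rightarrow> 'a \<Rightarrow>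
   'b set \<Rightarrow> ('b \<Rightarrow> 'b \<Rightarrow> bool) \<Rightarrow> ('b \<Rightarrow> nat set) \<Rightarrow> 'b \<Rightarrow> bool" where
  "is_k_bisimulation k S A le c r B le' c' r' \<longleftrightarrow>
     (\<forall>j\<le>k. S j \<subseteq> A \<times> B) \<and>
     (\<forall>j<k. S (Suc j) \<subseteq> S j) \<and>
     (r, r') \<in> S k \<and>
     (\<forall>(u, v)\<in>S 0. c u = c' v) \<and>
     (\<forall>j<k. \<forall>(u, v)\<in>S (Suc j). \<forall>u'\<in>A. le u u' \<longrightarrow> (\<exists>v'\<in>B. le' v v' \<and> (u', v') \<in> S j)) \<and>
     (\<forall>j<k. \<forall>(u, v)\<in>S (Suc j). \<forall>v'\<in>B. le' v v' \<longrightarrow> (\<exists>u'\<in>A. le u u' \<and> (u', v') \<in> S j))"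

definition k_bisimilar ::
  "nat \<Rightarrow> 'a set \<Rightarrow> ('a \<Rightarrow> 'a \<Rightarrow> bool) \<Rightarrow> ('a \<Rightarrow> nat set) \<Rightarrow> 'a \<Rightarrow>
   'b set \<Rightarrow> ('b \<Rightarrow> 'b \<Rightarrow> bool) \<Rightarrow> ('b \<Rightarrow> nat set) \<Rightarrow> 'b \<Rightarrow> bool" where
  "k_bisimilar k A le c r B le' c' r' \<longleftrightarrow> (\<exists>S. is_k_bisimulation k S A le c r B le' c' r')"

text \<open>Rooted submodel generated by a point w: the upset of w, rooted at w.\<close>

definition upset :: "'a set \<Rightarrow> ('a \<Rightarrow> 'a \<Rightarrow> bool) \<Rightarrow> 'a \<Rightarrow> 'a set" where
  "upset A le w = {v \<in> A. le w v}"

definition n_generated :: "'a set \<Rightarrow> ('a \<Rightarrow> 'a \<Rightarrow> bool) \<Rightarrow> ('a \<Rightarrow> nat set) \<Rightarrow> bool" where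
  "n_generated A le c \<longleftrightarrow>
     (\<forall>u\<in>A. \<forall>w\<in>A. u \<noteq> w \<longrightarrow>
        \<not> bisimilar (upset A le u) le c u (upset A le w) le c w)"

datatype cpt = X nat | Y nat

fun comb_le :: "cpt \<Rightarrow> cpt \<Rightarrow> bool" where
  "comb_le (Y i) z = (z = Y i)"
| "comb_le (X i) (X j) = (i \<le> j)"
| "comb_le (X i) (Y j) = (i \<le> j)"

text \<open>The m-comb has points x_1..x_m, y_1..y_m.  A broken comb is the subposet
  containing all x_1..x_m and the teeth y_i for i in T, T \<subseteq> {1..m}.\<close>

definition broken_comb :: "nat \<Rightarrow> nat set \<Rightarrow> cpt set" where
  "broken_comb m T = {X i | i. 1 \<le> i \<and> i \<le> m} \<union> {Y i | i. i \<in> T}"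

end

theory Submission
  imports Defs
begin

lemma mem_X[simp]: "X i \<in> broken_comb m T \<longleftrightarrow> 1 \<le> i \<and> i \<le> m"
  by (auto simp: broken_comb_def)
lemma mem_Y[simp]: "Y i \<in> broken_comb m T \<longleftrightarrow> i \<in> T"
  by (auto simp: broken_comb_def)

lemma comb_le_refl[simp]: "comb_le a a"
  by (cases a) auto

lemma comb_le_trans: "comb_le a b \<Longrightarrow> comb_le b d \<Longrightarrow> comb_le a d"
  by (cases a; cases b; cases d) auto

definition maxl :: "nat \<Rightarrow> nat set \<Rightarrow> cpt \<Rightarrow> bool" where
  "maxl m T w \<longleftrightarrow> w \<in> broken_comb m T \<and> (\<forall>z\<in>broken_comb m T. comb_le w z \<longrightarrow> z = w)"

definition MC :: "nat \<Rightarrow> nat set \<Rightarrow> (cpt \<Rightarrow> nat set) \<Rightarrow> cpt \<Rightarrow> nat set set" where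
  "MC m T c u = c ` {w. maxl m T w \<and> comb_le u w}"

lemma kbisim_sym:
  assumes "is_k_bisimulation k S A le c r B le' c' r'"
  shows "is_k_bisimulation k (\<lambda>j. (S j)\<inverse>) B le' c' r' A le c r"
  using assms unfolding is_k_bisimulation_def by fast

locale bcomb =
  fixes n m T c
  assumes m1: "1 \<le> m" and TT: "T \<subseteq> {1..m}"
    and model: "is_model n (broken_comb m T) comb_le c (X 1)"
    and gen: "n_generated (broken_comb m T) comb_le c"
begin

abbreviation "P \<equiv> broken_comb m T"

lemma mono: "a \<in> P \<Longrightarrow> b \<in> P \<Longrightarrow> comb_le a b \<Longrightarrow> c a \<subseteq> c b"
  using model unfolding is_model_def by blast

lemma gen_contra:
  assumes "u \<in> P" "w \<in> P" "u \<noteq> w"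
    "is_bisimulation Z (upset P comb_le u) comb_le c u (upset P comb_le w) comb_le c w"
  shows False
  using gen assms unfolding n_generated_def bisimilar_def by blast

lemma Y_max: "j \<in> T \<Longrightarrow> maxl m T (Y j)"
  by (auto simp: maxl_def)

lemma exists_max: assumes "v \<in> P" shows "\<exists>w. maxl m T w \<and> comb_le v w"
proof (cases "m \<in> T")
  case True
  then show ?thesis using assms TT by (cases v) (auto simp: maxl_def broken_comb_def intro!: exI[of _ "Y m"])
next
  case False
  have "maxl m T (X m)" using False TT m1 unfolding maxl_def
    by (auto simp: broken_comb_def)
  then show ?thesis using assms by (cases v) (auto simp: broken_comb_def maxl_def intro!: exI[of _ "X m"])
qed

lemma max_col_inj:
  assumes "maxl m T u" "maxl m T w" "c u = c w" shows "u = w"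
proof (rule ccontr)
  assume ne: "u \<noteq> w"
  have uu: "upset P comb_le u = {u}" and uw: "upset P comb_le w = {w}"
    using assms(1,2) by (auto simp: upset_def maxl_def)
  have "is_bisimulation {(u,w)} (upset P comb_le u) comb_le c u (upset P comb_le w) comb_le c w"
    unfolding uu uw is_bisimulation_def using assms(3) by auto
  moreover have "u \<in> P" "w \<in> P" using assms(1,2) unfolding maxl_def by auto
  ultimately show False using gen_contra[of u w] ne by blast
qed

lemma const_max:
  assumes "v \<in> P" "\<forall>w\<in>P. comb_le v w \<longrightarrow> c w = c v" shows "maxl m T v"
proof -
  obtain w where w: "maxl m T w" "comb_le v w" using exists_max assms(1) by blast
  show ?thesis
  proof (cases "w = v")
    case True then show ?thesis using w by simp
  next
    case False
    have wP: "w \<in> P" using w by (auto simp: maxl_def)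
    have uw: "upset P comb_le w = {w}" using w(1) by (auto simp: upset_def maxl_def)
    have "is_bisimulation (upset P comb_le v \<times> {w}) (upset P comb_le v) comb_le c v (upset P comb_le w) comb_le c w"
      unfolding uw is_bisimulation_def
    proof (intro conjI)
      show "upset P comb_le v \<times> {w} \<subseteq> upset P comb_le v \<times> {w}" by simp
      show "(v, w) \<in> upset P comb_le v \<times> {w}" using assms(1) by (simp add: upset_def)
      have cw: "c w = c v" using assms(2) wP w(2) by blast
      show "\<forall>(a, b)\<in>upset P comb_le v \<times> {w}. c a = c b"
        using assms(2) cw unfolding upset_def by auto
      show "\<forall>(a, b)\<in>upset P comb_le v \<times> {w}. \<forall>a'\<in>upset P comb_le v. comb_le a a' \<longrightarrow>
          (\<exists>b'\<in>{w}. comb_le b b' \<and> (a', b') \<in> upset P comb_le v \<times> {w})"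
        using comb_le_refl by blast
      show "\<forall>(a, b)\<in>upset P comb_le v \<times> {w}. \<forall>b'\<in>{w}. comb_le b b' \<longrightarrow>
          (\<exists>a'\<in>upset P comb_le v. comb_le a a' \<and> (a', b') \<in> upset P comb_le v \<times> {w})"
        using comb_le_refl by blast
    qed
    then have False using gen_contra[of v w] False assms(1) wP by blast
    then show ?thesis ..
  qed
qed

lemma chain_strict:
  assumes "j \<notin> T" "1 \<le> j" "j < m" shows "c (X j) \<noteq> c (X (Suc j))"
proof
  assume eq: "c (X j) = c (X (Suc j))"
  define Z where "Z = insert (X j, X (Suc j)) (Id_on (upset P comb_le (X (Suc j))))"
  have up: "z \<in> upset P comb_le (X j) \<Longrightarrow> z \<noteq> X j \<Longrightarrow> z \<in> upset P comb_le (X (Suc j))" for z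
    using assms by (cases z) (auto simp: upset_def Suc_le_eq le_less)
  have "is_bisimulation Z (upset P comb_le (X j)) comb_le c (X j) (upset P comb_le (X (Suc j))) comb_le c (X (Suc j))"
    unfolding is_bisimulation_def
  proof (intro conjI)
    show "Z \<subseteq> upset P comb_le (X j) \<times> upset P comb_le (X (Suc j))"
      using assms unfolding Z_def upset_def by (auto intro: comb_le_trans[of "X j" "X (Suc j)"])
    show "(X j, X (Suc j)) \<in> Z" unfolding Z_def by simp
    show "\<forall>(u, v)\<in>Z. c u = c v" unfolding Z_def using eq by auto
    show "\<forall>(u, v)\<in>Z. \<forall>u'\<in>upset P comb_le (X j). comb_le u u' \<longrightarrow>
        (\<exists>v'\<in>upset P comb_le (X (Suc j)). comb_le v v' \<and> (u', v') \<in> Z)"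
    proof (intro ballI impI, clarify)
      fix u v u' assume uv: "(u, v) \<in> Z" and u': "u' \<in> upset P comb_le (X j)" "comb_le u u'"
      show "\<exists>v'\<in>upset P comb_le (X (Suc j)). comb_le v v' \<and> (u', v') \<in> Z"
      proof (cases "u = X j")
        case True
        then have v: "v = X (Suc j)" using uv assms unfolding Z_def upset_def by auto
        show ?thesis
        proof (cases "u' = X j")
          case True then show ?thesis using v assms by (auto simp: Z_def upset_def intro!: exI[of _ "X (Suc j)"])
        next
          case False
          then have "u' \<in> upset P comb_le (X (Suc j))" using up u' by blast
          then show ?thesis using v by (auto simp: Z_def upset_def)
        qed
      next
        case False
        then have "u = v" "u \<in> upset P comb_le (X (Suc j))" using uv unfolding Z_def by auto
        then have "u' \<in> upset P comb_le (X (Suc j))" using u' comb_le_trans by (auto simp: upset_def)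
        then show ?thesis using \<open>u = v\<close> u' by (auto simp: Z_def)
      qed
    qed
    show "\<forall>(u, v)\<in>Z. \<forall>v'\<in>upset P comb_le (X (Suc j)). comb_le v v' \<longrightarrow>
        (\<exists>u'\<in>upset P comb_le (X j). comb_le u u' \<and> (u', v') \<in> Z)"
    proof (intro ballI impI, clarify)
      fix u v v' assume uv: "(u, v) \<in> Z" and v': "v' \<in> upset P comb_le (X (Suc j))" "comb_le v v'"
      have v'2: "v' \<in> upset P comb_le (X j)" using v' comb_le_trans[of "X j" "X (Suc j)" v']
        by (auto simp: upset_def)
      have "comb_le u v'"
        using uv v' comb_le_trans[of "X j" "X (Suc j)" v'] unfolding Z_def by (auto simp: upset_def)
      then show "\<exists>u'\<in>upset P comb_le (X j). comb_le u u' \<and> (u', v') \<in> Z"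
        using v' v'2 by (auto simp: Z_def intro!: bexI[of _ v'])
    qed
  qed
  moreover have "X j \<in> P" "X (Suc j) \<in> P" "X j \<noteq> X (Suc j)" using assms by auto
  ultimately show False using gen_contra by blast
qed


lemma MC_anti: "comb_le u u' \<Longrightarrow> MC m T c u' \<subseteq> MC m T c u"
  unfolding MC_def by (auto intro: comb_le_trans)

lemma order_char:
  assumes uP: "u \<in> P" and u'P: "u' \<in> P" and cc: "c u \<subseteq> c u'" and MM: "MC m T c u' \<subseteq> MC m T c u"
  shows "comb_le u u'"
proof (cases "maxl m T u'")
  case True
  have "c u' \<in> MC m T c u'" using True unfolding MC_def by auto
  then obtain w where w: "maxl m T w" "comb_le u w" "c w = c u'" using MM unfolding MC_def by auto
  then have "w = u'" using max_col_inj True by blast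
  then show ?thesis using w by simp
next
  case False
  then obtain k where k: "u' = X k" using Y_max u'P by (cases u') auto
  show ?thesis
  proof (cases "maxl m T u")
    case True
    have "\<forall>w\<in>P. comb_le u' w \<longrightarrow> c w = c u'"
    proof (intro ballI impI)
      fix w assume wP: "w \<in> P" and uw: "comb_le u' w"
      obtain z where z: "maxl m T z" "comb_le w z" using exists_max wP by blast
      have zP: "z \<in> P" using z by (auto simp: maxl_def)
      have "c z \<in> MC m T c u'" using z uw comb_le_trans unfolding MC_def by blast
      then obtain z' where z': "maxl m T z'" "comb_le u z'" "c z' = c z" using MM unfolding MC_def by auto
      have "z' = u" using True z' uP unfolding maxl_def by blast
      then have "c z = c u" using z' by simp
      moreover have "c u' \<subseteq> c w" using mono u'P wP uw by blast
      moreover have "c w \<subseteq> c z" using mono wP zP z by blast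
      ultimately show "c w = c u'" using cc by blast
    qed
    then have "maxl m T u'" using const_max u'P by blast
    then show ?thesis using False by simp
  next
    case False
    then obtain i where i: "u = X i" using Y_max uP by (cases u) auto
    show ?thesis
    proof (rule ccontr)
      assume "\<not> comb_le u u'"
      then have ki: "k < i" using i k by simp
      have le: "comb_le u' u" using i k ki by simp
      have MCe: "MC m T c u = MC m T c u'" using MC_anti[OF le] MM by blast
      have ce: "c u = c u'" using mono[OF u'P uP le] cc by blast
      have k1: "1 \<le> k" "k < m" using u'P uP k i ki by auto
      show False
      proof (cases "k \<in> T")
        case True
        have "c (Y k) \<in> MC m T c u'" using Y_max[OF True] k unfolding MC_def by auto
        then have "c (Y k) \<in> MC m T c u" using MCe by simp
        then obtain w where w: "maxl m T w" "comb_le u w" "c w = c (Y k)" unfolding MC_def by blast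
        then have "w = Y k" using max_col_inj Y_max[OF True] by blast
        then show False using w(2) i ki by simp
      next
        case False
        have "c (X k) \<noteq> c (X (Suc k))" using chain_strict[OF False k1] .
        moreover have "c (X k) \<subseteq> c (X (Suc k))" using mono[of "X k" "X (Suc k)"] k1 by simp
        moreover have "c (X (Suc k)) \<subseteq> c (X i)" using mono[of "X (Suc k)" "X i"] k1 ki uP i by simp
        ultimately show False using ce i k by blast
      qed
    qed
  qed
qed

end

lemma MC_pres:
  assumes Q: "bcomb n m' T' c'"
    and S: "is_k_bisimulation 3 S (broken_comb m T) comb_le c r (broken_comb m' T') comb_le c' r'"
    and uv: "(u, v) \<in> S 2"
  shows "MC m T c u \<subseteq> MC m' T' c' v"
proof
  fix d assume "d \<in> MC m T c u"
  then obtain w where w: "maxl m T w" "comb_le u w" "d = c w" unfolding MC_def by auto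
  have wP: "w \<in> broken_comb m T" using w by (auto simp: maxl_def)
  have F: "\<And>j a b u'. j < 3 \<Longrightarrow> (a, b) \<in> S (Suc j) \<Longrightarrow> u' \<in> broken_comb m T \<Longrightarrow> comb_le a u' \<Longrightarrow>
      \<exists>v'\<in>broken_comb m' T'. comb_le b v' \<and> (u', v') \<in> S j"
    using S unfolding is_k_bisimulation_def by blast
  have B: "\<And>j a b v'. j < 3 \<Longrightarrow> (a, b) \<in> S (Suc j) \<Longrightarrow> v' \<in> broken_comb m' T' \<Longrightarrow> comb_le b v' \<Longrightarrow>
      \<exists>u'\<in>broken_comb m T. comb_le a u' \<and> (u', v') \<in> S j"
    using S unfolding is_k_bisimulation_def by blast
  have uv2: "(u, v) \<in> S (Suc 1)" using uv by (simp add: numeral_2_eq_2)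
  have "\<exists>v'\<in>broken_comb m' T'. comb_le v v' \<and> (w, v') \<in> S 1"
    using F[OF _ uv2 wP w(2)] by simp
  then obtain v' where v': "v' \<in> broken_comb m' T'" "comb_le v v'" "(w, v') \<in> S 1" by blast
  have S10: "S 1 \<subseteq> S 0" using S unfolding is_k_bisimulation_def by auto
  have col: "\<forall>(a, b)\<in>S 0. c a = c' b" using S unfolding is_k_bisimulation_def by auto
  have "(w, v') \<in> S 0" using v'(3) S10 by blast
  then have cv': "c' v' = c w" using col by fastforce
  have "\<forall>z\<in>broken_comb m' T'. comb_le v' z \<longrightarrow> c' z = c' v'"
  proof (intro ballI impI)
    fix z assume zQ: "z \<in> broken_comb m' T'" and vz: "comb_le v' z"
    have "\<exists>w'\<in>broken_comb m T. comb_le w w' \<and> (w', z) \<in> S 0"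
      using B[of 0 w v' z] v'(3) zQ vz by simp
    then obtain w' where "w' \<in> broken_comb m T" "comb_le w w'" "(w', z) \<in> S 0" by blast
    then have "w' = w" "c' z = c w'" using w(1) col unfolding maxl_def by auto
    then show "c' z = c' v'" using cv' by simp
  qed
  then have "maxl m' T' v'" using bcomb.const_max[OF Q] v'(1) by blast
  then show "d \<in> MC m' T' c' v" using v' cv' w(3) unfolding MC_def by auto
qed


theorem mainTheorem9:
  fixes n m m' :: nat and T T' :: "nat set" and c c' :: "cpt \<Rightarrow> nat set"
  assumes "1 \<le> m" and "T \<subseteq> {1..m}" and "1 \<le> m'" and "T' \<subseteq> {1..m'}"
    and "is_model n (broken_comb m T) comb_le c (X 1)"
    and "is_model n (broken_comb m' T') comb_le c' (X 1)"
    and "n_generated (broken_comb m T) comb_le c"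
    and "n_generated (broken_comb m' T') comb_le c'"
    and "k_bisimilar 3 (broken_comb m T) comb_le c (X 1) (broken_comb m' T') comb_le c' (X 1)"
  shows "bisimilar (broken_comb m T) comb_le c (X 1) (broken_comb m' T') comb_le c' (X 1)"
proof -
  let ?P = "broken_comb m T" and ?Q = "broken_comb m' T'"
  have BP: "bcomb n m T c" using assms unfolding bcomb_def by blast
  have BQ: "bcomb n m' T' c'" using assms unfolding bcomb_def by blast
  obtain S where S: "is_k_bisimulation 3 S ?P comb_le c (X 1) ?Q comb_le c' (X 1)"
    using assms(9) unfolding k_bisimilar_def by blast
  have S': "is_k_bisimulation 3 (\<lambda>j. (S j)\<inverse>) ?Q comb_le c' (X 1) ?P comb_le c (X 1)"
    using kbisim_sym[OF S] .
  have S32: "S 3 \<subseteq> S 2" and S21: "S 2 \<subseteq> S 1" and S10: "S 1 \<subseteq> S 0"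
    using S unfolding is_k_bisimulation_def
    by (auto simp: numeral_3_eq_3 numeral_2_eq_2)
  have col: "\<forall>(a, b)\<in>S 0. c a = c' b" using S unfolding is_k_bisimulation_def by auto
  have root: "(X 1, X 1) \<in> S 3" using S unfolding is_k_bisimulation_def by auto
  have F: "\<And>j a b u'. j < 3 \<Longrightarrow> (a, b) \<in> S (Suc j) \<Longrightarrow> u' \<in> ?P \<Longrightarrow> comb_le a u' \<Longrightarrow>
      \<exists>v'\<in>?Q. comb_le b v' \<and> (u', v') \<in> S j"
    using S unfolding is_k_bisimulation_def by blast
  have B: "\<And>j a b v'. j < 3 \<Longrightarrow> (a, b) \<in> S (Suc j) \<Longrightarrow> v' \<in> ?Q \<Longrightarrow> comb_le b v' \<Longrightarrow>
      \<exists>u'\<in>?P. comb_le a u' \<and> (u', v') \<in> S j"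
    using S unfolding is_k_bisimulation_def by blast
  define Z where "Z = {(u, v). u \<in> ?P \<and> v \<in> ?Q \<and> c u = c' v \<and> MC m T c u = MC m' T' c' v}"
  have inZ: "(u, v) \<in> Z" if "(u, v) \<in> S 2" for u v
  proof -
    have "S 2 \<subseteq> ?P \<times> ?Q" using S unfolding is_k_bisimulation_def by auto
    then have "u \<in> ?P" "v \<in> ?Q" using that by auto
    moreover have "(u, v) \<in> S 0" using that S21 S10 by blast
    then have "c u = c' v" using col by blast
    moreover have "MC m T c u \<subseteq> MC m' T' c' v" using MC_pres[OF BQ S that] .
    moreover have "MC m' T' c' v \<subseteq> MC m T c u" using MC_pres[OF BP S'] that by simp
    ultimately show ?thesis unfolding Z_def by auto
  qed
  have allP: "\<exists>v\<in>?Q. (u, v) \<in> Z" if "u \<in> ?P" for u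
  proof -
    have "comb_le (X 1) u" using assms(5) that unfolding is_model_def by blast
    then have "\<exists>v\<in>?Q. comb_le (X 1) v \<and> (u, v) \<in> S 2"
      using F[of 2 "X 1" "X 1" u] root that by (simp add: numeral_3_eq_3 numeral_2_eq_2)
    then show ?thesis using inZ by blast
  qed
  have allQ: "\<exists>u\<in>?P. (u, v) \<in> Z" if "v \<in> ?Q" for v
  proof -
    have "comb_le (X 1) v" using assms(6) that unfolding is_model_def by blast
    then have "\<exists>u\<in>?P. comb_le (X 1) u \<and> (u, v) \<in> S 2"
      using B[of 2 "X 1" "X 1" v] root that by (simp add: numeral_3_eq_3 numeral_2_eq_2)
    then show ?thesis using inZ by blast
  qed
  have "is_bisimulation Z ?P comb_le c (X 1) ?Q comb_le c' (X 1)"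
    unfolding is_bisimulation_def
  proof (intro conjI)
    show "Z \<subseteq> ?P \<times> ?Q" unfolding Z_def by auto
    show "(X 1, X 1) \<in> Z" using inZ root S32 by auto
    show "\<forall>(u, v)\<in>Z. c u = c' v" unfolding Z_def by auto
    show "\<forall>(u, v)\<in>Z. \<forall>u'\<in>?P. comb_le u u' \<longrightarrow> (\<exists>v'\<in>?Q. comb_le v v' \<and> (u', v') \<in> Z)"
    proof (intro ballI impI, clarify)
      fix u v u' assume uv: "(u, v) \<in> Z" and u'P: "u' \<in> ?P" and le: "comb_le u u'"
      obtain v' where v': "v' \<in> ?Q" "(u', v') \<in> Z" using allP u'P by blast
      have uP: "u \<in> ?P" using uv unfolding Z_def by auto
      have "c' v \<subseteq> c' v'" using uv v' bcomb.mono[OF BP uP u'P le] unfolding Z_def by auto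
      moreover have "MC m' T' c' v' \<subseteq> MC m' T' c' v"
        using uv v' bcomb.MC_anti[OF BP le] unfolding Z_def by auto
      moreover have "v \<in> ?Q" using uv unfolding Z_def by auto
      ultimately have "comb_le v v'" using bcomb.order_char[OF BQ] v'(1) by blast
      then show "\<exists>v'\<in>?Q. comb_le v v' \<and> (u', v') \<in> Z" using v' by blast
    qed
    show "\<forall>(u, v)\<in>Z. \<forall>v'\<in>?Q. comb_le v v' \<longrightarrow> (\<exists>u'\<in>?P. comb_le u u' \<and> (u', v') \<in> Z)"
    proof (intro ballI impI, clarify)
      fix u v v' assume uv: "(u, v) \<in> Z" and v'Q: "v' \<in> ?Q" and le: "comb_le v v'"
      obtain u' where u': "u' \<in> ?P" "(u', v') \<in> Z" using allQ v'Q by blast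
      have vQ: "v \<in> ?Q" using uv unfolding Z_def by auto
      have "c u \<subseteq> c u'" using uv u' bcomb.mono[OF BQ vQ v'Q le] unfolding Z_def by auto
      moreover have "MC m T c u' \<subseteq> MC m T c u"
        using uv u' bcomb.MC_anti[OF BQ le] unfolding Z_def by auto
      moreover have "u \<in> ?P" using uv unfolding Z_def by auto
      ultimately have "comb_le u u'" using bcomb.order_char[OF BP] u'(1) by blast
      then show "\<exists>u'\<in>?P. comb_le u u' \<and> (u', v') \<in> Z" using u' by blast
    qed
  qed
  then show ?thesis unfolding bisimilar_def by blast
qed

end
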